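(* Let $n\ge 3$ and let $G$ be a graph on $2n$ vertices with at least $n^2-1$ edges that contains no two distinct vertices of the same degree joined by a path of length three. Let $\beta$ be the largest integer such that $G$ contains two distinct vertices of degree $\beta$, and let $\Delta$ be the maximum degree of $G$. Then $3\le\beta\le\Delta$.
   Context: A path of length three joining vertices $a$ and $b$ is a path $a\,x\,y\,b$ with four distinct vertices and three edges. Graphs are finite and simple. *)

theory Defs
  imports Main
begin

definition simple_graph :: "'a set \<Rightarrow> ('a \<Rightarrow> 'a \<Rightarrow> bool) \<Rightarrow> bool" where
  "simple_graph V E \<longleftrightarrow> finite V \<and> (\<forall>u v. E u v \<longrightarrow> u \<in> V \<and> v \<in> V)
     \<and> (\<forall>u v. E u v \<longrightarrow> E v u) \<and> (\<forall>u. \<not> E u u)"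

definition degree :: "'a set \<Rightarrow> ('a \<Rightarrow> 'a \<Rightarrow> bool) \<Rightarrow> 'a \<Rightarrow> nat" where
  "degree V E v = card {u \<in> V. E v u}"

definition edges :: "'a set \<Rightarrow> ('a \<Rightarrow> 'a \<Rightarrow> bool) \<Rightarrow> 'a set set" where
  "edges V E = {{u, v} | u v. u \<in> V \<and> v \<in> V \<and> E u v}"

definition path3 :: "'a set \<Rightarrow> ('a \<Rightarrow> 'a \<Rightarrow> bool) \<Rightarrow> 'a \<Rightarrow> 'a \<Rightarrow> bool" where
  "path3 V E a b \<longleftrightarrow> (\<exists>x y. a \<in> V \<and> x \<in> V \<and> y \<in> V \<and> b \<in> V \<and>
     distinct [a, x, y, b] \<and> E a x \<and> E x y \<and> E y b)"

definition repeated_degrees :: "'a set \<Rightarrow> ('a \<Rightarrow> 'a \<Rightarrow> bool) \<Rightarrow> nat set" where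
  "repeated_degrees V E = {d. \<exists>u \<in> V. \<exists>v \<in> V. u \<noteq> v \<and> degree V E u = d \<and> degree V E v = d}"

definition max_degree :: "'a set \<Rightarrow> ('a \<Rightarrow> 'a \<Rightarrow> bool) \<Rightarrow> nat" where
  "max_degree V E = Max (degree V E ` V)"

end

theory Submission imports Defs begin

lemma handshake:
  assumes g: "simple_graph V E"
  shows "2 * card (edges V E) = (\<Sum>v\<in>V. degree V E v)"
proof -
  have fin: "finite V" and sym: "\<And>u v. E u v \<Longrightarrow> E v u" and irr: "\<And>u. \<not> E u u"
    and inV: "\<And>u v. E u v \<Longrightarrow> u \<in> V \<and> v \<in> V"
    using g unfolding simple_graph_def by auto
  define Dt where "Dt = (SIGMA v:V. {u\<in>V. E v u})"
  have "card Dt = (\<Sum>v\<in>V. degree V E v)"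
    unfolding Dt_def degree_def using fin by (subst card_SigmaI) auto
  moreover have "Dt = (\<Union>e\<in>edges V E. {p\<in>Dt. {fst p, snd p} = e})"
    unfolding Dt_def edges_def by fastforce
  moreover have "card (\<Union>e\<in>edges V E. {p\<in>Dt. {fst p, snd p} = e}) = (\<Sum>e\<in>edges V E. card {p\<in>Dt. {fst p, snd p} = e})"
  proof (rule card_UN_disjoint)
    have "edges V E \<subseteq> Pow V" unfolding edges_def by auto
    then show "finite (edges V E)" using fin by (meson finite_Pow_iff finite_subset)
    have "finite Dt" unfolding Dt_def using fin by auto
    then show "\<forall>i\<in>edges V E. finite {p \<in> Dt. {fst p, snd p} = i}" by auto
  qed auto
  moreover have "card {p\<in>Dt. {fst p, snd p} = e} = 2" if eE: "e \<in> edges V E" for e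
  proof -
    obtain a b where e: "e = {a,b}" "a \<in> V" "b \<in> V" "E a b" using eE unfolding edges_def by blast
    have ab: "a \<noteq> b" using e irr by auto
    have "{p\<in>Dt. {fst p, snd p} = e} = {(a,b),(b,a)}"
      unfolding Dt_def using e sym ab by (auto simp: doubleton_eq_iff)
    then show ?thesis using ab by simp
  qed
  ultimately show ?thesis by simp
qed

lemma sum_closed: "(\<Sum>d\<in>{3..2*m+2}. d - 2) = m * (2*m+1::nat)"
proof (induction m)
  case 0 then show ?case by simp
next
  case (Suc m)
  have "{3..2*Suc m+2} = insert (2*m+4) (insert (2*m+3) {3..2*m+2})" by auto
  then show ?case using Suc by (simp add: algebra_simps)
qed


lemma main_contra:
  fixes V :: "'a set" and E :: "'a \<Rightarrow> 'a \<Rightarrow> bool" and n :: nat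
  assumes g: "simple_graph V E"
    and n3: "n \<ge> 3"
    and cV: "card V = 2 * n"
    and ce: "card (edges V E) \<ge> n\<^sup>2 - 1"
    and np: "\<forall>a \<in> V. \<forall>b \<in> V. a \<noteq> b \<and> degree V E a = degree V E b \<longrightarrow> \<not> path3 V E a b"
    and inj: "inj_on (degree V E) {v\<in>V. 3 \<le> degree V E v}"
  shows False
proof -
  have fin: "finite V" and sym: "\<And>u v. E u v \<Longrightarrow> E v u" and irr: "\<And>u. \<not> E u u"
    and inV: "\<And>u v. E u v \<Longrightarrow> u \<in> V \<and> v \<in> V"
    using g unfolding simple_graph_def by auto
  define D where "D = degree V E"
  define H where "H = {v\<in>V. 3 \<le> D v}"
  have injH: "inj_on D H" using inj unfolding D_def H_def .
  have finH: "finite H" unfolding H_def using fin by auto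
  have Dle: "D v \<le> 2*n - 1" if "v \<in> V" for v
  proof -
    have "{u\<in>V. E v u} \<subseteq> V - {v}" using irr by auto
    then have "card {u\<in>V. E v u} \<le> card (V - {v})" using fin by (intro card_mono) auto
    then show ?thesis using that cV fin unfolding D_def degree_def by simp
  qed
  have lower: "2*n^2 - 2 \<le> (\<Sum>v\<in>V. D v)"
    using handshake[OF g] ce unfolding D_def by linarith
  show False
  proof (cases "\<exists>z\<in>V. D z = 2*n - 1")
    case False
    then have Dle2: "D v \<le> 2*n - 2" if "v \<in> V" for v using Dle[OF that] that by force
    have "(\<Sum>v\<in>V. D v) \<le> (\<Sum>v\<in>V. 2 + (D v - 2))" by (intro sum_mono) auto
    also have "\<dots> = (\<Sum>v\<in>V. 2) + (\<Sum>v\<in>V. D v - 2)" by (rule sum.distrib)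
    also have "(\<Sum>v\<in>V. (2::nat)) = 4*n" using cV by simp
    also have "(\<Sum>v\<in>V. D v - 2) = (\<Sum>v\<in>H. D v - 2)"
      using fin unfolding H_def by (intro sum.mono_neutral_right) auto
    also have "\<dots> = (\<Sum>d\<in>D ` H. d - 2)" using injH by (simp add: sum.reindex)
    also have "\<dots> \<le> (\<Sum>d\<in>{3..2*(n-2)+2}. d - 2)"
    proof (intro sum_mono2)
      show "D ` H \<subseteq> {3..2*(n-2)+2}" unfolding H_def using Dle2 n3 by force
    qed auto
    also have "\<dots> = (n-2) * (2*(n-2)+1)" by (rule sum_closed)
    finally have "(\<Sum>v\<in>V. D v) \<le> 4*n + (n-2) * (2*(n-2)+1)" by simp
    moreover obtain m where m: "n = m + 3" using n3 by (metis add.commute le_iff_add)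
    moreover have "4*n + (n-2) * (2*(n-2)+1) = 2*m*m + 9*m + 15" using m by (simp add: algebra_simps)
    moreover have "2*n^2 - 2 = 2*m*m + 12*m + 16" using m by (simp add: power2_eq_square algebra_simps)
    ultimately show False using lower by linarith
  next
    case True
    then obtain z where z: "z \<in> V" "D z = 2*n - 1" by blast
    have zH: "z \<in> H" unfolding H_def using z n3 by auto
    have nz: "{u\<in>V. E z u} = V - {z}"
    proof (rule card_subset_eq)
      show "finite (V - {z})" using fin by auto
      show "{u\<in>V. E z u} \<subseteq> V - {z}" using irr by auto
      show "card {u\<in>V. E z u} = card (V - {z})" using z cV fin unfolding D_def degree_def by simp
    qed
    have zadj: "E z w" if "w \<in> V" "w \<noteq> z" for w using nz that by blast
    have one: "card {w\<in>V-H. E y w} \<le> 1" if y: "y \<in> H" "y \<noteq> z" for y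
    proof (rule ccontr)
      assume "\<not> ?thesis"
      moreover have fW: "finite {w\<in>V-H. E y w}" using fin by auto
      ultimately obtain u v where uv: "u \<in> {w\<in>V-H. E y w}" "v \<in> {w\<in>V-H. E y w}" "u \<noteq> v"
        using card_le_Suc0_iff_eq[OF fW] by auto
      have yV: "y \<in> V" using y H_def by auto
      have deg2: "D w = 2" if w: "w \<in> {x\<in>V-H. E y x}" for w
      proof -
        have dw2: "D w \<le> 2" using w unfolding H_def by auto
        have wz: "w \<noteq> z" using w zH unfolding H_def by auto
        have "E w y" using w sym[of y w] by simp
        then have "{z, y} \<subseteq> {x\<in>V. E w x}" using w sym[OF zadj[OF _ wz]] z yV y by auto
        then have "card {z,y} \<le> D w" unfolding D_def degree_def using fin by (intro card_mono) auto
        then have "2 \<le> D w" using y by simp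
        with dw2 show ?thesis by simp
      qed
      have uz: "u \<noteq> z" "v \<noteq> z" using uv zH unfolding H_def by auto
      have uy: "u \<noteq> y" "v \<noteq> y" using uv y by auto
      have "path3 V E u v"
        unfolding path3_def
        apply (rule exI[of _ y], rule exI[of _ z])
        using uv y yV z zH zadj[OF _ uz(2)] sym[OF zadj[OF yV y(2)]] sym[of y u] uz uy by simp
      moreover have "D u = D v" using deg2 uv by simp
      ultimately show False using np uv unfolding D_def by auto
    qed
    have Dy: "D y \<le> card H" if y: "y \<in> H" "y \<noteq> z" for y
    proof -
      have "{w\<in>V. E y w} \<subseteq> (H - {y}) \<union> {w\<in>V-H. E y w}" using irr by auto
      then have "D y \<le> card ((H - {y}) \<union> {w\<in>V-H. E y w})"
        unfolding D_def degree_def using fin finH by (intro card_mono) auto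
      also have "\<dots> \<le> card (H - {y}) + card {w\<in>V-H. E y w}" by (rule card_Un_le)
      also have "\<dots> \<le> (card H - 1) + 1" using one[OF y] y finH by simp
      finally have "D y \<le> (card H - 1) + 1" .
      moreover have "card H \<noteq> 0" using y finH by auto
      ultimately show ?thesis by linarith
    qed
    have H3: "\<And>y. y \<in> H \<Longrightarrow> 3 \<le> D y" unfolding H_def by auto
    have "D ` (H - {z}) \<subseteq> {3..card H}" using Dy H3 by (simp add: image_subset_iff)
    then have "card (D ` (H - {z})) \<le> card {3..card H}" by (intro card_mono) auto
    moreover have "card (D ` (H - {z})) = card H - 1"
      using injH zH finH by (simp add: card_image inj_on_diff)
    ultimately have "card H - 1 \<le> card H - 2" by simp
    moreover have "card H \<noteq> 0" using zH finH by auto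
    ultimately have "card H = 1" by linarith
    then have Hz: "H = {z}" using zH by (metis card_1_singletonE singletonD)
    have "(\<Sum>v\<in>V. D v) \<le> (\<Sum>v\<in>V. if v = z then 2*n-1 else 2)"
    proof (intro sum_mono)
      fix v assume "v \<in> V"
      then show "D v \<le> (if v = z then 2*n-1 else 2)" using Hz z unfolding H_def by force
    qed
    also have "\<dots> = (2*n - 1) + (\<Sum>v\<in>V-{z}. 2)" using z fin by (simp add: sum.remove)
    also have "\<dots> = (2*n-1) + 2*(2*n-1)" using cV z fin by simp
    finally have "(\<Sum>v\<in>V. D v) \<le> (2*n-1) + 2*(2*n-1)" .
    moreover obtain m where m: "n = m + 3" using n3 by (metis add.commute le_iff_add)
    moreover have "(2*n-1) + 2*(2*n-1) = 6*m + 15" using m by simp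
    moreover have "2*n^2 - 2 = 2*m*m + 12*m + 16" using m by (simp add: power2_eq_square algebra_simps)
    ultimately show False using lower by linarith
  qed
qed


theorem lemma3p2:
  fixes V :: "'a set" and E :: "'a \<Rightarrow> 'a \<Rightarrow> bool" and n :: nat
  assumes "simple_graph V E"
    and "n \<ge> 3"
    and "card V = 2 * n"
    and "card (edges V E) \<ge> n\<^sup>2 - 1"
    and "\<forall>a \<in> V. \<forall>b \<in> V. a \<noteq> b \<and> degree V E a = degree V E b \<longrightarrow> \<not> path3 V E a b"
  shows "repeated_degrees V E \<noteq> {} \<and>
         3 \<le> Max (repeated_degrees V E) \<and> Max (repeated_degrees V E) \<le> max_degree V E"
proof -
  have fin: "finite V" using assms(1) unfolding simple_graph_def by auto
  have "\<not> inj_on (degree V E) {v\<in>V. 3 \<le> degree V E v}"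
    using main_contra[OF assms] by blast
  then obtain u v where uv: "u \<in> V" "v \<in> V" "u \<noteq> v" "degree V E u = degree V E v"
    "3 \<le> degree V E u"
    unfolding inj_on_def by auto
  have dR: "degree V E u \<in> repeated_degrees V E"
    unfolding repeated_degrees_def using uv by auto
  have degle: "degree V E w \<le> card V" for w
    unfolding degree_def using fin by (intro card_mono) auto
  have finR: "finite (repeated_degrees V E)"
  proof (rule finite_subset)
    show "repeated_degrees V E \<subseteq> {0..card V}" unfolding repeated_degrees_def using degle by auto
  qed auto
  have ne: "repeated_degrees V E \<noteq> {}" using dR by blast
  have "3 \<le> Max (repeated_degrees V E)"
    using Max_ge[OF finR dR] uv(5) by linarith
  moreover have "Max (repeated_degrees V E) \<le> max_degree V E"
  proof -
    have "Max (repeated_degrees V E) \<in> repeated_degrees V E" using Max_in[OF finR ne] .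
    then obtain w where w: "w \<in> V" "degree V E w = Max (repeated_degrees V E)"
      unfolding repeated_degrees_def by blast
    have "degree V E w \<le> Max (degree V E ` V)" using w(1) fin by (intro Max_ge) auto
    then show ?thesis using w unfolding max_degree_def by simp
  qed
  ultimately show ?thesis using ne by blast
qed

end
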